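(* Let $V=\{v_0,\dots,v_{L-1}\}$ be a set of $L\ge1$ boolean variables and let $n_0,\dots,n_t$ ($t\ge1$) be a sequence of nodes, node $n_j$ carrying a state $s_j:V\to\{0,1\}$. Let $n^c=n_t$ (child) with state $s^c=s_t$ and $n^p=n_k$ (parent) for some $k\in\{0,\dots,t-1\}$, and suppose the states of $n^p$ and $n^c$ differ in exactly $e$ variables. For a node $n=n_m$ in the sequence define $\alpha_{0:t}(n)=\frac{1}{t}\sum_{i\in\{0,\dots,t\},i\ne m}\delta(n,n_i)$ with $\delta(n_m,n_i)=\frac1L\sum_{l=0}^{L-1}\mathbf{1}_{s_m(v_l)\neq s_i(v_l)}$. Let $$\mu=\mu_{t-1}^{min}(n^c)=\min_{0\le l\le L-1}\frac{N_{t-1}^{v_l}(s^c)}{t},\qquad N_{t-1}^{v_l}(s^c)=|\{j\in\{0,\dots,t-1\}\mid s_j(v_l)=s^c(v_l)\}|.$$ Then $$\alpha_{0:t}(n^c)\le\alpha_{0:t}(n^p)+\frac{t-1}{t}\,\frac{e-2e\mu}{L}.$$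
   Context: $\delta$ is the normalized Hamming distance between node states; $\alpha_{0:t}(n)$ is the average normalized Hamming distance of a node of the sequence to all other nodes; $\mu_{t-1}^{min}(n^c)$ is the minimum, over all variables, of the fraction of the first $t$ nodes $n_0,\dots,n_{t-1}$ whose state agrees with the child's state on that variable. *)

theory Defs
  imports Complex_Main
begin

text \<open>A sequence of nodes n_0..n_t is represented by its states:
  s j l is the value of variable v_l at node n_j (j \<le> t, l < L).\<close>

definition hdist :: "nat \<Rightarrow> (nat \<Rightarrow> nat \<Rightarrow> bool) \<Rightarrow> nat \<Rightarrow> nat \<Rightarrow> real" where
  "hdist L s m i = (1 / real L) * (\<Sum>l<L. if s m l \<noteq> s i l then 1 else 0)"

definition alpha :: "nat \<Rightarrow> (nat \<Rightarrow> nat \<Rightarrow> bool) \<Rightarrow> nat \<Rightarrow> nat \<Rightarrow> real" where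
  "alpha L s t m = (1 / real t) * (\<Sum>i\<in>{0..t} - {m}. hdist L s m i)"

definition Ncount :: "(nat \<Rightarrow> nat \<Rightarrow> bool) \<Rightarrow> nat \<Rightarrow> nat \<Rightarrow> nat" where
  "Ncount s t l = card {j\<in>{0..t-1}. s j l = s t l}"

definition mu_min :: "nat \<Rightarrow> (nat \<Rightarrow> nat \<Rightarrow> bool) \<Rightarrow> nat \<Rightarrow> real" where
  "mu_min L s t = Min ((\<lambda>l. real (Ncount s t l) / real t) ` {0..<L})"

end

theory Submission
  imports Defs
begin

lemma card_filter_real:
  assumes "finite A"
  shows "real (card {j\<in>A. P j}) = (\<Sum>j\<in>A. if P j then 1 else 0)"
proof -
  have "real (card {j\<in>A. P j}) = (\<Sum>j\<in>{j\<in>A. P j}. (1::real))" by simp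
  also have "\<dots> = (\<Sum>j\<in>A. if P j then 1 else 0)"
    by (rule sum.inter_filter[OF assms])
  finally show ?thesis .
qed

theorem theorem5:
  fixes L t k e :: nat and s :: "nat \<Rightarrow> nat \<Rightarrow> bool"
  assumes "L \<ge> 1" and "t \<ge> 1" and "k < t"
    and "e = card {l\<in>{0..<L}. s k l \<noteq> s t l}"
  shows "alpha L s t t \<le> alpha L s t k
           + (real (t - 1) / real t) * ((real e - 2 * real e * mu_min L s t) / real L)"
proof -
  define E where "E = {l\<in>{0..<L}. s k l \<noteq> s t l}"
  define N where "N l = (\<Sum>i<t. if s i l = s t l then 1 else (0::real))" for l
  define \<mu> where "\<mu> = mu_min L s t"
  have finE: "finite E" and Esub: "E \<subseteq> {..<L}" unfolding E_def by auto
  have eE: "real e = (\<Sum>l\<in>E. 1)" using assms(4) E_def by simp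
  have Nc: "real (Ncount s t l) = N l" for l
  proof -
    have "{0..t-1} = {..<t}" using assms(2) by auto
    then show ?thesis unfolding Ncount_def N_def
      using card_filter_real[of "{..<t}" "\<lambda>j. s j l = s t l"] by simp
  qed
  have fin_img: "finite ((\<lambda>l. real (Ncount s t l) / real t) ` {0..<L})" by simp
  have mu_le: "\<mu> \<le> N l / t" if "l < L" for l
  proof -
    have "\<mu> \<le> real (Ncount s t l) / real t"
      unfolding \<mu>_def mu_min_def using that by (intro Min_le) auto
    then show ?thesis using Nc by simp
  qed
  have mu_ge: "\<mu> \<ge> 0"
  proof -
    have ne: "(\<lambda>l. real (Ncount s t l) / real t) ` {0..<L} \<noteq> {}" using assms(1) by auto
    show ?thesis unfolding \<mu>_def mu_min_def
      using fin_img ne by (subst Min_ge_iff) auto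
  qed
  have tpos: "real t > 0" using assms(2) by simp
  have Lpos: "real L > 0" using assms(1) by simp
  have Nle: "(real t - 1) * \<mu> \<le> N l" if "l < L" for l
  proof -
    have "real t * \<mu> \<le> N l" using mu_le[OF that] tpos by (simp add: field_simps)
    moreover have "(real t - 1) * \<mu> \<le> real t * \<mu>" using mu_ge by (simp add: algebra_simps)
    ultimately show ?thesis by linarith
  qed
  have inner_c: "(\<Sum>i<t. if s t l \<noteq> s i l then 1 else (0::real)) = real t - N l" for l
  proof -
    have "(\<Sum>i<t. if s t l \<noteq> s i l then 1 else (0::real)) = (\<Sum>i<t. 1 - (if s i l = s t l then 1 else 0))"
      by (intro sum.cong) auto
    then show ?thesis unfolding N_def by (simp add: sum_subtractf)
  qed
  have inner_p: "(\<Sum>i<t. if s k l \<noteq> s i l then 1 else (0::real)) = (if l \<in> E then N l else real t - N l)"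
    if "l < L" for l
  proof (cases "l \<in> E")
    case True
    then have "s k l = (\<not> s t l)" unfolding E_def by auto
    then have "(\<Sum>i<t. if s k l \<noteq> s i l then 1 else (0::real)) = N l"
      unfolding N_def by (intro sum.cong) auto
    then show ?thesis using True by simp
  next
    case False
    then have "s k l = s t l" unfolding E_def using that by auto
    then show ?thesis using False inner_c[of l] by simp
  qed
  have alc: "alpha L s t t = (1/t) * (1/L) * (\<Sum>l<L. real t - N l)"
  proof -
    have "{0..t} - {t} = {..<t}" by auto
    then have "alpha L s t t = (1/t) * (\<Sum>i<t. hdist L s t i)" unfolding alpha_def by simp
    also have "\<dots> = (1/t) * (1/L) * (\<Sum>i<t. \<Sum>l<L. if s t l \<noteq> s i l then 1 else 0)"
      unfolding hdist_def by (simp add: sum_distrib_left)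
    also have "\<dots> = (1/t) * (1/L) * (\<Sum>l<L. \<Sum>i<t. if s t l \<noteq> s i l then 1 else 0)"
      by (simp add: sum.swap[of _ "{..<t}"])
    also have "\<dots> = (1/t) * (1/L) * (\<Sum>l<L. real t - N l)"
      using sum.cong[OF refl inner_c, where A="{..<L}"] by (simp only:)
    finally show ?thesis .
  qed
  have hkk: "hdist L s k k = 0" unfolding hdist_def by simp
  have hkt: "hdist L s k t = (1/L) * real e"
  proof -
    have "(\<Sum>l<L. if s k l \<noteq> s t l then 1 else (0::real)) = real (card {l\<in>{..<L}. s k l \<noteq> s t l})"
      by (rule card_filter_real[symmetric]) simp
    also have "{l\<in>{..<L}. s k l \<noteq> s t l} = E" unfolding E_def by auto
    finally show ?thesis unfolding hdist_def using assms(4) E_def by simp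
  qed
  have alp: "alpha L s t k = (1/t) * (1/L) * ((\<Sum>l<L. if l \<in> E then N l else real t - N l) + real e)"
  proof -
    have s1: "{0..t} - {k} = ({..<t} - {k}) \<union> {t}" using assms(3) by auto
    have "(\<Sum>i\<in>{0..t} - {k}. hdist L s k i) = (\<Sum>i\<in>{..<t} - {k}. hdist L s k i) + hdist L s k t"
      unfolding s1 by (subst sum.union_disjoint) auto
    also have "(\<Sum>i\<in>{..<t} - {k}. hdist L s k i) = (\<Sum>i<t. hdist L s k i)"
      using hkk assms(3) by (subst sum_diff1) auto
    finally have "alpha L s t k = (1/t) * ((\<Sum>i<t. hdist L s k i) + (1/L) * real e)"
      unfolding alpha_def hkt by simp
    also have "(\<Sum>i<t. hdist L s k i) = (1/L) * (\<Sum>i<t. \<Sum>l<L. if s k l \<noteq> s i l then 1 else 0)"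
      unfolding hdist_def by (simp add: sum_distrib_left)
    also have "(\<Sum>i<t. \<Sum>l<L. if s k l \<noteq> s i l then 1 else (0::real)) = (\<Sum>l<L. \<Sum>i<t. if s k l \<noteq> s i l then 1 else 0)"
      by (rule sum.swap)
    also have "\<dots> = (\<Sum>l<L. if l \<in> E then N l else real t - N l)"
      by (rule sum.cong[OF refl inner_p]) simp
    finally show ?thesis by (simp add: algebra_simps)
  qed
  have diff: "(\<Sum>l<L. real t - N l) - ((\<Sum>l<L. if l \<in> E then N l else real t - N l) + real e)
      = (\<Sum>l\<in>E. real t - 1 - 2 * N l)"
  proof -
    have "(\<Sum>l<L. real t - N l) - (\<Sum>l<L. if l \<in> E then N l else real t - N l)
        = (\<Sum>l<L. if l \<in> E then real t - 2 * N l else 0)"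
      by (simp add: sum_subtractf[symmetric]) (intro sum.cong, auto)
    also have "\<dots> = (\<Sum>l\<in>E. real t - 2 * N l)"
      using Esub by (simp add: sum.If_cases Int_absorb1)
    moreover have "(\<Sum>l\<in>E. real t - 1 - 2 * N l) = (\<Sum>l\<in>E. real t - 2 * N l) - (\<Sum>l\<in>E. 1)"
      by (subst sum_subtractf[symmetric]) (rule sum.cong, auto)
    ultimately show ?thesis using eE by linarith
  qed
  have bound: "(\<Sum>l\<in>E. real t - 1 - 2 * N l) \<le> (\<Sum>l\<in>E. (real t - 1) - 2 * ((real t - 1) * \<mu>))"
    using Esub Nle by (intro sum_mono) fastforce
  also have "\<dots> = real e * ((real t - 1) - 2 * ((real t - 1) * \<mu>))" using eE by simp
  finally have b2: "(\<Sum>l\<in>E. real t - 1 - 2 * N l) \<le> real e * ((real t - 1) - 2 * ((real t - 1) * \<mu>))" .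
  have "alpha L s t t - alpha L s t k = (1/t) * (1/L) * (\<Sum>l\<in>E. real t - 1 - 2 * N l)"
    unfolding alc alp using diff by (simp add: diff_divide_distrib[symmetric])
  also have "\<dots> \<le> (1/t) * (1/L) * (real e * ((real t - 1) - 2 * ((real t - 1) * \<mu>)))"
    using b2 tpos Lpos by (intro mult_left_mono) auto
  also have "\<dots> = (real (t - 1) / real t) * ((real e - 2 * real e * \<mu>) / real L)"
    using assms(2) by (simp add: of_nat_diff field_simps)
  finally show ?thesis unfolding \<mu>_def by linarith
qed

end
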